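(* For each $n\in\mathbb{N}^2$, the map $L_n:\mathcal{O}_\theta\to\mathcal{O}_\theta$ defined by \[L_n(a)=\frac{1}{N^n}\sum_{\lambda\in\Lambda_\theta^n}s_\lambda^*as_\lambda\] is a transfer operator for $\alpha_n$ (that is, $L_n$ is positive and linear and $L_n(\alpha_n(a)b)=aL_n(b)$ for all $a,b\in\mathcal{O}_\theta$) such that $L_n(1)=1$, and $L_m\circ L_n=L_{m+n}$ for all $m,n\in\mathbb{N}^2$.
   Context: $E$ is a finite directed graph with one vertex whose edge set is partitioned into $N_1$ blue edges $E^1_B$ and $N_2$ red edges $E^1_R$; $\theta$ is a bijection from blue-red paths $ef$ ($e\in E^1_B$, $f\in E^1_R$) onto red-blue paths, written $\theta(ef)=\theta_1(ef)\theta_2(ef)$. $\Lambda_\theta$ is the unique $2$-graph (category with degree functor $d:\Lambda_\theta\to\mathbb{N}^2$ satisfying unique factorisation) with one vertex, $\Lambda_\theta^{(1,0)}=E^1_B$, $\Lambda_\theta^{(0,1)}=E^1_R$, and $ef=\theta_1(ef)\theta_2(ef)$; $\Lambda_\theta^n=d^{-1}(n)$, which has $N^n:=N_1^{n_1}N_2^{n_2}$ elements for $n=(n_1,n_2)$. $\mathcal{O}_\theta=C^*(\Lambda_\theta)$ is the universal $C^*$-algebra generated by isometries $\{s_\lambda:\lambda\in\Lambda_\theta\}$ with $s_{\lambda\mu}=s_\lambda s_\mu$ and $\sum_{\lambda\in\Lambda_\theta^n}s_\lambda s_\lambda^*=1$ for all $n$ (equivalently, by Cuntz families $\{s_e\}_{e\in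 E^1_B}$, $\{s_f\}_{f\in E^1_R}$ with $s_es_f=s_{\theta_1(ef)}s_{\theta_2(ef)}$). For $n\in\mathbb{N}^2$, $\alpha_n(a)=\sum_{\lambda\in\Lambda_\theta^n}s_\lambda as_\lambda^*$. *)

theory Defs
  imports "HOL-Analysis.Analysis" "HOL-Library.Product_Plus"
begin

class cstar_algebra = real_normed_algebra_1 + banach +
  fixes scaleC :: "complex \<Rightarrow> 'a \<Rightarrow> 'a"
    and adj :: "'a \<Rightarrow> 'a"
  assumes scaleC_of_real: "scaleC (complex_of_real r) x = scaleR r x"
    and scaleC_add_right: "scaleC c (x + y) = scaleC c x + scaleC c y"
    and scaleC_add_left: "scaleC (c + d) x = scaleC c x + scaleC d x"
    and scaleC_scaleC: "scaleC c (scaleC d x) = scaleC (c * d) x"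
    and scaleC_one: "scaleC 1 x = x"
    and mult_scaleC_left: "scaleC c x * y = scaleC c (x * y)"
    and mult_scaleC_right: "x * scaleC c y = scaleC c (x * y)"
    and norm_scaleC: "norm (scaleC c x) = cmod c * norm x"
    and adj_adj: "adj (adj x) = x"
    and adj_add: "adj (x + y) = adj x + adj y"
    and adj_scaleC: "adj (scaleC c x) = scaleC (cnj c) (adj x)"
    and adj_mult: "adj (x * y) = adj y * adj x"
    and cstar_identity: "norm (adj x * x) = (norm x)\<^sup>2"

definition positive :: "'a::cstar_algebra \<Rightarrow> bool" where
  "positive x \<longleftrightarrow> (\<exists>y. x = adj y * y)"

definition positive_map :: "('a::cstar_algebra \<Rightarrow> 'a) \<Rightarrow> bool" where
  "positive_map L \<longleftrightarrow> (\<forall>x. positive x \<longrightarrow> positive (L x))"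

definition clinear_map :: "('a::cstar_algebra \<Rightarrow> 'a) \<Rightarrow> bool" where
  "clinear_map L \<longleftrightarrow> (\<forall>x y. L (x + y) = L x + L y) \<and> (\<forall>c x. L (scaleC c x) = scaleC c (L x))"

definition transfer_operator :: "('a::cstar_algebra \<Rightarrow> 'a) \<Rightarrow> ('a \<Rightarrow> 'a) \<Rightarrow> bool" where
  "transfer_operator alpha L \<longleftrightarrow>
     positive_map L \<and> clinear_map L \<and> (\<forall>a b. L (alpha a * b) = a * L b)"

text \<open>Blue edges are 0..<N1, red edges are 0..<N2.  By unique factorisation
  every path lambda of degree (n1,n2) factors uniquely as a blue path of
  length n1 followed by a red path of length n2; we represent lambda by this
  pair of words.\<close>

definition paths :: "nat \<Rightarrow> nat \<Rightarrow> nat \<times> nat \<Rightarrow> (nat list \<times> nat list) set" where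
  "paths N1 N2 n = {(w, v). length w = fst n \<and> set w \<subseteq> {..<N1} \<and>
                            length v = snd n \<and> set v \<subseteq> {..<N2}}"

definition spath :: "(nat \<Rightarrow> 'a::cstar_algebra) \<Rightarrow> (nat \<Rightarrow> 'a) \<Rightarrow> nat list \<times> nat list \<Rightarrow> 'a" where
  "spath sB sR p = prod_list (map sB (fst p)) * prod_list (map sR (snd p))"

definition alpha_n :: "nat \<Rightarrow> nat \<Rightarrow> (nat \<Rightarrow> 'a::cstar_algebra) \<Rightarrow> (nat \<Rightarrow> 'a) \<Rightarrow> nat \<times> nat \<Rightarrow> 'a \<Rightarrow> 'a" where
  "alpha_n N1 N2 sB sR n a = (\<Sum>p\<in>paths N1 N2 n. spath sB sR p * a * adj (spath sB sR p))"

definition L_n :: "nat \<Rightarrow> nat \<Rightarrow> (nat \<Rightarrow> 'a::cstar_algebra) \<Rightarrow> (nat \<Rightarrow> 'a) \<Rightarrow> nat \<times> nat \<Rightarrow> 'a \<Rightarrow> 'a" where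
  "L_n N1 N2 sB sR n a =
     scaleR (1 / real (N1 ^ fst n * N2 ^ snd n))
       (\<Sum>p\<in>paths N1 N2 n. adj (spath sB sR p) * a * spath sB sR p)"

text \<open>A Cuntz--Krieger Lambda_theta family: Cuntz families of blue and red
  isometries satisfying the commutation relations given by theta, where
  theta (e, f) = (theta1 (ef), theta2 (ef)) with theta1 red and theta2 blue.\<close>
definition theta_family ::
  "nat \<Rightarrow> nat \<Rightarrow> (nat \<times> nat \<Rightarrow> nat \<times> nat) \<Rightarrow> (nat \<Rightarrow> 'a::cstar_algebra) \<Rightarrow> (nat \<Rightarrow> 'a) \<Rightarrow> bool" where
  "theta_family N1 N2 theta sB sR \<longleftrightarrow>
     (\<forall>e<N1. adj (sB e) * sB e = 1) \<and> (\<Sum>e<N1. sB e * adj (sB e)) = 1 \<and>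
     (\<forall>f<N2. adj (sR f) * sR f = 1) \<and> (\<Sum>f<N2. sR f * adj (sR f)) = 1 \<and>
     (\<forall>e<N1. \<forall>f<N2. sB e * sR f = sR (fst (theta (e, f))) * sB (snd (theta (e, f))))"

end

theory Submission
  imports Defs "HOL-Analysis.Analysis"
begin


lemma scaleC_zero_right[simp]: "scaleC c (0::'a::cstar_algebra) = 0"
  using scaleC_add_right[of c "0::'a" 0] by simp

lemma scaleC_zero_left[simp]: "scaleC 0 (x::'a::cstar_algebra) = 0"
  using scaleC_add_left[of 0 0 x] by simp

lemma scaleC_sum: "scaleC c (sum f S) = (\<Sum>x\<in>S. scaleC c (f x :: 'a::cstar_algebra))"
  by (induction S rule: infinite_finite_induct) (auto simp: scaleC_add_right)

lemma scaleC_sum_left: "scaleC (sum f S) (x::'a::cstar_algebra) = (\<Sum>i\<in>S. scaleC (f i) x)"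
  by (induction S rule: infinite_finite_induct) (auto simp: scaleC_add_left)

lemma scaleR_as_scaleC: "scaleR r (x::'a::cstar_algebra) = scaleC (complex_of_real r) x"
  by (simp add: scaleC_of_real)

lemma adj_zero[simp]: "adj (0::'a::cstar_algebra) = 0"
  using adj_add[of "0::'a" 0] by simp

lemma adj_one[simp]: "adj (1::'a::cstar_algebra) = 1"
proof -
  have "adj (1::'a) = adj 1 * adj (adj 1)" by (simp only: adj_adj mult_1_right)
  also have "\<dots> = adj (adj 1 * 1)" by (simp only: adj_mult)
  also have "\<dots> = 1" by (simp add: adj_adj)
  finally show ?thesis .
qed

lemma adj_sum: "adj (sum f S) = (\<Sum>x\<in>S. adj (f x :: 'a::cstar_algebra))"
  by (induction S rule: infinite_finite_induct) (auto simp: adj_add)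

lemma adj_scaleR: "adj (scaleR r (x::'a::cstar_algebra)) = scaleR r (adj x)"
  by (simp add: scaleR_as_scaleC adj_scaleC)

lemma adj_uminus: "adj (- (x::'a::cstar_algebra)) = - adj x"
  using adj_add[of x "-x"] by (simp add: eq_neg_iff_add_eq_0 add.commute)

lemma adj_diff: "adj ((x::'a::cstar_algebra) - y) = adj x - adj y"
  using adj_add[of x "-y"] by (simp add: adj_uminus)

lemma norm_adj: "norm (adj (x::'a::cstar_algebra)) = norm x"
proof -
  have le: "norm y \<le> norm (adj y)" for y :: 'a
  proof (cases "y = 0")
    case False
    have "(norm y)^2 \<le> norm (adj y) * norm y"
      using cstar_identity[of y] norm_mult_ineq[of "adj y" y] by simp
    then show ?thesis using False by (simp add: power2_eq_square)
  qed simp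
  show ?thesis using le[of x] le[of "adj x"] by (simp add: adj_adj)
qed

lemma norm_le_one_of_adj: "norm (adj x * (x::'a::cstar_algebra)) \<le> 1 \<Longrightarrow> norm x \<le> 1"
  by (simp add: cstar_identity power_le_one_iff)

lemma mult_scaleC_both: "scaleC c x * scaleC d y = scaleC (c*d) (x * (y::'a::cstar_algebra))"
  by (simp add: mult_scaleC_left mult_scaleC_right scaleC_scaleC mult.commute)

lemma scaleC_scaleR_comm: "scaleC c (scaleR r x) = scaleR r (scaleC c (x::'a::cstar_algebra))"
  by (simp add: scaleR_as_scaleC scaleC_scaleC mult.commute)

lemma K_step1:
  fixes a :: "'a::cstar_algebra"
  assumes H: "\<forall>l. \<bar>l\<bar> \<le> 1 \<longrightarrow> norm (1 + scaleR l a) \<le> 1"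
    and mu: "0 \<le> mu" "mu \<le> 1"
  shows "norm (1 + scaleR mu (a*a)) \<le> 1"
proof -
  define l where "l = sqrt mu"
  have l: "\<bar>l\<bar> \<le> 1" "\<bar>-l\<bar> \<le> 1" "l * l = mu" using mu by (auto simp: l_def)
  have e1: "(1 + scaleR t a)*(1 + scaleR t a) = 1 + scaleR t a + scaleR t a + scaleR (t*t) (a*a)" for t
    by (simp add: distrib_left distrib_right add.assoc scaleR_add_right)
  have eq: "(1 + scaleR mu (a*a)) + (1 + scaleR mu (a*a)) = (1 + scaleR l a)*(1 + scaleR l a) + (1 + scaleR (-l) a)*(1 + scaleR (-l) a)"
    unfolding e1 l(3)[symmetric] by simp
  have "norm ((1 + scaleR l a)*(1 + scaleR l a)) \<le> 1"
    using norm_mult_ineq[of "1 + scaleR l a" "1 + scaleR l a"] H l(1)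
    by (smt (verit) mult_le_one norm_ge_zero)
  moreover have "norm ((1 + scaleR (-l) a)*(1 + scaleR (-l) a)) \<le> 1"
    using norm_mult_ineq[of "1 + scaleR (-l) a" "1 + scaleR (-l) a"] H l(2)
    by (smt (verit) mult_le_one norm_ge_zero)
  ultimately have "norm ((1 + scaleR mu (a*a)) + (1 + scaleR mu (a*a))) \<le> 2"
    unfolding eq by (smt (verit, best) norm_triangle_ineq)
  then show ?thesis by (metis mult_2 mult_le_cancel_left_pos norm_scaleR real_norm_def scaleR_2 zero_less_numeral abs_numeral mult_1_right)
qed

lemma K_step2:
  fixes a :: "'a::cstar_algebra"
  assumes sa: "adj a = a" and H: "\<forall>l. \<bar>l\<bar> \<le> 1 \<longrightarrow> norm (1 + scaleR l a) \<le> 1"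
    and z: "cmod z \<le> 1/4"
  shows "norm (1 + scaleC z a) \<le> 1"
proof -
  define E where "E = 1 + scaleC z a"
  have adjE: "adj E = 1 + scaleC (cnj z) a" by (simp add: E_def adj_add adj_scaleC sa)
  have e0: "adj E * E = 1 + scaleC z a + scaleC (cnj z) a + scaleC (cnj z * z) (a*a)"
    unfolding adjE unfolding E_def by (simp add: distrib_left distrib_right add.assoc mult_scaleC_both mult_scaleC_left mult_scaleC_right scaleC_one scaleC_add_right scaleC_scaleC mult.commute)
  have e1: "scaleC z a + scaleC (cnj z) a = scaleR (2 * Re z) a"
    by (simp add: scaleC_add_left[symmetric] complex_add_cnj scaleR_as_scaleC)
  have e2: "cnj z * z = complex_of_real ((cmod z)^2)"
    by (metis complex_norm_square mult.commute)
  have eq: "adj E * E = 1 + scaleR (2 * Re z) a + scaleR ((cmod z)^2) (a*a)"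
    unfolding e0 e2 e1[symmetric] by (simp add: add.assoc scaleR_as_scaleC)
  have re: "\<bar>4 * Re z\<bar> \<le> 1" using abs_Re_le_cmod[of z] z by linarith
  have n1: "norm (1 + scaleR (4 * Re z) a) \<le> 1" using H re by blast
  have c2: "0 \<le> 2 * (cmod z)^2" "2 * (cmod z)^2 \<le> 1"
  proof -
    have "(cmod z)^2 \<le> (1/4)^2" using z by (intro power_mono) auto
    then show "2 * (cmod z)^2 \<le> 1" by (simp add: power2_eq_square)
  qed simp
  have n2: "norm (1 + scaleR (2 * (cmod z)^2) (a*a)) \<le> 1" using K_step1[OF H c2] .
  have "adj E * E + adj E * E = (1 + scaleR (4 * Re z) a) + (1 + scaleR (2 * (cmod z)^2) (a*a))"
    unfolding eq by (simp add: algebra_simps scaleR_add_left[symmetric])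
  then have "norm (adj E * E + adj E * E) \<le> 2" using n1 n2
    by (metis norm_triangle_le one_add_one add_mono)
  then have "norm (adj E * E) \<le> 1"
    by (metis mult_2 mult_le_cancel_left_pos norm_scaleR real_norm_def scaleR_2 zero_less_numeral abs_numeral mult_1_right)
  then show ?thesis using norm_le_one_of_adj E_def by blast
qed

lemma binom_alg:
  fixes a :: "'a::cstar_algebra"
  shows "(1 + scaleC z a)^M = (\<Sum>j\<le>M. scaleC (of_nat (M choose j) * z^j) (a^j))"
proof (induction M)
  case 0
  then show ?case by (simp add: scaleC_one)
next
  case (Suc M)
  define S where "S = (\<Sum>j\<le>M. scaleC (of_nat (M choose j) * z^j) (a^j))"
  have S1: "S = (\<Sum>j\<le>Suc M. scaleC (of_nat (M choose j) * z^j) (a^j))"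
    by (simp add: S_def binomial_eq_0)
  have "scaleC z a * S = (\<Sum>j\<le>M. scaleC (z * (of_nat (M choose j) * z^j)) (a^(Suc j)))"
    unfolding S_def by (simp add: sum_distrib_left mult_scaleC_both)
  also have "\<dots> = (\<Sum>j\<le>Suc M. scaleC (if j = 0 then 0 else of_nat (M choose (j - 1)) * z^j) (a^j))"
    by (subst sum.atMost_Suc_shift) (simp add: mult.commute mult.left_commute)
  finally have S2: "scaleC z a * S = \<dots>" .
  have "(1 + scaleC z a)^Suc M = (1 + scaleC z a) * S" using Suc by (simp add: S_def)
  also have "\<dots> = S + scaleC z a * S" by (simp add: distrib_right)
  also have "\<dots> = (\<Sum>j\<le>Suc M. scaleC (of_nat (M choose j) * z^j + (if j = 0 then 0 else of_nat (M choose (j - 1)) * z^j)) (a^j))"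
    unfolding S2 by (subst S1) (simp add: sum.distrib[symmetric] scaleC_add_left)
  also have "\<dots> = (\<Sum>j\<le>Suc M. scaleC (of_nat (Suc M choose j) * z^j) (a^j))"
  proof (rule sum.cong[OF refl])
    fix j assume "j \<in> {..Suc M}"
    show "scaleC (of_nat (M choose j) * z^j + (if j = 0 then 0 else of_nat (M choose (j - 1)) * z^j)) (a^j) =
          scaleC (of_nat (Suc M choose j) * z^j) (a^j)"
      by (cases j) (simp_all add: algebra_simps)
  qed
  finally show ?case .
qed

lemma roots_sum:
  fixes n :: nat and m :: int
  assumes n: "n > 0" and m: "\<bar>m\<bar> < int n"
  shows "(\<Sum>k<n. (exp (\<i> * complex_of_real (2 * pi * of_int m / real n)))^k) = (if m = 0 then of_nat n else 0)"
proof (cases "m = 0")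
  case True then show ?thesis by simp
next
  case False
  define x where "x = exp (\<i> * complex_of_real (2 * pi * of_int m / real n))"
  have xn: "x^n = 1"
  proof -
    have "x^n = exp (of_nat n * (\<i> * complex_of_real (2 * pi * of_int m / real n)))"
      unfolding x_def by (simp only: exp_of_nat_mult)
    also have "of_nat n * (\<i> * complex_of_real (2 * pi * of_int m / real n)) = \<i> * complex_of_real (2 * pi * of_int m)"
      using n by (simp add: field_simps)
    also have "exp \<dots> = 1" by (subst exp_eq_1) (auto intro!: exI[of _ m])
    finally show ?thesis .
  qed
  have x1: "x \<noteq> 1"
  proof
    assume "x = 1"
    then obtain k :: int where k: "2 * pi * of_int m / real n = of_int (2 * k) * pi"
      unfolding x_def by (subst (asm) exp_eq_1) auto
    then have "real_of_int m = of_int k * real n" using n by (simp add: field_simps)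
    then have mk: "m = k * int n" by (metis of_int_eq_iff of_int_mult of_int_of_nat_eq)
    show False
    proof (cases "k = 0")
      case True then show False using mk False by simp
    next
      case False
      then have "\<bar>k\<bar> \<ge> 1" by linarith
      then have "\<bar>k * int n\<bar> \<ge> int n" by (simp add: abs_mult mult_le_cancel_right1)
      then show False using m mk by linarith
    qed
  qed
  show ?thesis using False xn x1 unfolding x_def[symmetric] by (simp add: sum_gp_strict)
qed

lemma exp_combine:
  fixes th :: real and j k :: nat
  shows "exp (\<i> * complex_of_real (- th * real k)) * exp (\<i> * complex_of_real (th * real k))^j
       = (exp (\<i> * complex_of_real (th * of_int (int j - 1))))^k"
proof -
  have "exp (\<i> * complex_of_real (- th * real k)) * exp (\<i> * complex_of_real (th * real k))^j
      = exp (\<i> * complex_of_real (- th * real k)) * exp (of_nat j * (\<i> * complex_of_real (th * real k)))"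
    by (simp only: exp_of_nat_mult)
  also have "\<dots> = exp (\<i> * complex_of_real (- th * real k) + of_nat j * (\<i> * complex_of_real (th * real k)))"
    by (simp only: exp_add)
  also have "\<i> * complex_of_real (- th * real k) + of_nat j * (\<i> * complex_of_real (th * real k))
      = of_nat k * (\<i> * complex_of_real (th * of_int (int j - 1)))"
    by (simp add: algebra_simps)
  also have "exp \<dots> = (exp (\<i> * complex_of_real (th * of_int (int j - 1))))^k"
    by (simp only: exp_of_nat_mult)
  finally show ?thesis .
qed

lemma K_step3:
  fixes a :: "'a::cstar_algebra"
  assumes sa: "adj a = a" and H: "\<forall>l. \<bar>l\<bar> \<le> 1 \<longrightarrow> norm (1 + scaleR l a) \<le> 1"
    and M: "M \<ge> 1"
  shows "real M * norm a \<le> 4"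
proof -
  define n where "n = Suc M"
  define th where "th = 2 * pi / real n"
  define w where "w k = exp (\<i> * complex_of_real (- th * real k))" for k :: nat
  define ze where "ze k = (1/4) * exp (\<i> * complex_of_real (th * real k))" for k :: nat
  define F where "F k = (1 + scaleC (ze k) a)^M" for k
  have cw: "cmod (w k) = 1" for k unfolding w_def by (simp only: norm_exp_i_times)
  have cz: "cmod (ze k) = 1/4" for k unfolding ze_def norm_mult norm_exp_i_times by simp
  have nF: "norm (F k) \<le> 1" for k
  proof -
    have "norm (F k) \<le> norm (1 + scaleC (ze k) a) ^ M" unfolding F_def by (rule norm_power_ineq)
    also have "\<dots> \<le> 1" using K_step2[OF sa H, of "ze k"] cz by (simp add: power_le_one)
    finally show ?thesis .
  qed
  define T where "T = (\<Sum>k<n. scaleC (w k) (F k))"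
  have nT: "norm T \<le> real n"
  proof -
    have "norm T \<le> (\<Sum>k<n. norm (scaleC (w k) (F k)))" unfolding T_def by (rule norm_sum)
    also have "\<dots> \<le> (\<Sum>k<n. 1)" by (rule sum_mono) (simp add: norm_scaleC cw nF)
    finally show ?thesis by simp
  qed
  have coef: "(\<Sum>k<n. w k * ze k ^ j) = (1/4)^j * (if j = 1 then of_nat n else 0)" if "j \<le> M" for j
  proof -
    have "(\<Sum>k<n. w k * ze k ^ j) = (1/4)^j * (\<Sum>k<n. (exp (\<i> * complex_of_real (2 * pi * of_int (int j - 1) / real n)))^k)"
      unfolding sum_distrib_left
    proof (rule sum.cong[OF refl])
      fix k assume "k \<in> {..<n}"
      have "w k * ze k ^ j = (1/4)^j * (exp (\<i> * complex_of_real (- th * real k)) * exp (\<i> * complex_of_real (th * real k))^j)"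
        unfolding w_def ze_def by (simp only: power_mult_distrib mult.left_commute)
      also have "\<dots> = (1/4)^j * (exp (\<i> * complex_of_real (th * of_int (int j - 1))))^k"
        by (simp only: exp_combine)
      also have "th * of_int (int j - 1) = 2 * pi * of_int (int j - 1) / real n" by (simp add: th_def)
      finally show "w k * ze k ^ j = (1/4)^j * (exp (\<i> * complex_of_real (2 * pi * of_int (int j - 1) / real n)))^k" .
    qed
    also have "\<dots> = (1/4)^j * (if int j - 1 = 0 then of_nat n else 0)"
      using that M by (subst roots_sum) (auto simp: n_def abs_if)
    finally show ?thesis by auto
  qed
  have "T = (\<Sum>k<n. \<Sum>j\<le>M. scaleC (w k * (of_nat (M choose j) * ze k ^ j)) (a^j))"
    unfolding T_def F_def binom_alg by (simp add: scaleC_sum scaleC_scaleC)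
  also have "\<dots> = (\<Sum>j\<le>M. scaleC (of_nat (M choose j) * (\<Sum>k<n. w k * ze k ^ j)) (a^j))"
    by (subst sum.swap) (simp add: scaleC_sum_left[symmetric] sum_distrib_left mult_ac)
  also have "\<dots> = (\<Sum>j\<le>M. if j = 1 then scaleC (of_nat M * (1/4) * of_nat n) a else 0)"
    by (rule sum.cong[OF refl]) (auto simp: coef)
  also have "\<dots> = scaleC (of_nat M * (1/4) * of_nat n) a" using M by simp
  finally have "T = scaleC (complex_of_real (real M * (1/4) * real n)) a" by simp
  then have "norm T = real M * (1/4) * real n * norm a" by (simp only: norm_scaleC norm_of_real) simp
  with nT have "real M * (1/4) * real n * norm a \<le> real n" by simp
  then have "(real M * norm a) * real n \<le> 4 * real n" by (simp add: field_simps)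
  moreover have "real n > 0" using n_def by simp
  ultimately show ?thesis by simp
qed

lemma K:
  fixes a :: "'a::cstar_algebra"
  assumes sa: "adj a = a" and H: "\<forall>l. \<bar>l\<bar> \<le> 1 \<longrightarrow> norm (1 + scaleR l a) \<le> 1"
  shows "a = 0"
proof (rule ccontr)
  assume "a \<noteq> 0"
  then have p: "norm a > 0" by simp
  obtain M :: nat where M: "4 / norm a < real M" using reals_Archimedean2 by blast
  have "0 < real M" using M p by (smt (verit) divide_pos_pos)
  then have "M \<ge> 1" by simp
  from K_step3[OF sa H this] have "real M * norm a \<le> 4" .
  with M p show False by (simp add: field_simps)
qed

lemma of_nat_scaleR: "of_nat n = scaleR (real n) (1::'a::cstar_algebra)"
  by (metis of_real_def of_real_of_nat_eq)

lemma sum_one_alg: "(\<Sum>k\<in>A. (1::'a::cstar_algebra)) = scaleR (real (card A)) 1"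
  by (simp add: of_nat_scaleR)

lemma G_lemma:
  fixes t :: "nat \<Rightarrow> 'a::cstar_algebra"
  assumes fin: "finite S" and sa: "\<forall>j\<in>S. adj (t j) = t j" and nb: "\<forall>j\<in>S. norm (1 - t j) \<le> 1"
    and s0: "sum t S = 0" and j: "j \<in> S"
  shows "t j = 0"
proof -
  define R where "R = S - {j}"
  have finR: "finite R" using fin by (simp add: R_def)
  have sumR: "sum t R = - t j" using s0 sum.remove[OF fin j, of t] by (simp add: R_def eq_neg_iff_add_eq_0 add.commute)
  show ?thesis
  proof (cases "R = {}")
    case True then show ?thesis using sumR by simp
  next
    case False
    define m where "m = real (card R)"
    have m: "m \<ge> 1" using False finR by (simp add: m_def Suc_le_eq card_gt_0_iff)
    define a where "a = scaleR (1/m) (t j)"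
    have saa: "adj a = a" using sa j by (simp add: a_def adj_scaleR)
    have H: "\<forall>l. \<bar>l\<bar> \<le> 1 \<longrightarrow> norm (1 + scaleR l a) \<le> 1"
    proof (intro allI impI)
      fix l :: real assume l: "\<bar>l\<bar> \<le> 1"
      show "norm (1 + scaleR l a) \<le> 1"
      proof (cases "l \<le> 0")
        case True
        define mu where "mu = - l / m"
        have mu: "0 \<le> mu" "mu \<le> 1" using True l m by (auto simp: mu_def field_simps)
        have la: "scaleR l a = - scaleR mu (t j)"
          using m by (simp add: a_def mu_def)
        have "1 + scaleR l a = scaleR (1 - mu) 1 + scaleR mu (1 - t j)"
          unfolding la by (simp only: scaleR_diff_left scaleR_diff_right scaleR_one diff_add_cancel) (simp add: diff_add_eq)
        also have "norm \<dots> \<le> (1 - mu) * 1 + mu * 1"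
        proof -
          have "norm (scaleR mu (1 - t j)) \<le> mu * 1" using nb j mu by (simp add: mult_left_le)
          moreover have "norm (scaleR (1 - mu) (1::'a)) = (1 - mu) * 1" using mu by simp
          ultimately show ?thesis using norm_triangle_ineq[of "scaleR (1 - mu) (1::'a)" "scaleR mu (1 - t j)"] by linarith
        qed
        finally show ?thesis by simp
      next
        case False
        have eqs: "(\<Sum>k\<in>R. (1 - t k)) = scaleR m 1 + t j"
          by (simp add: sum_subtractf sumR of_nat_scaleR m_def)
        have la: "scaleR (l/m) (scaleR m 1 + t j) = scaleR l 1 + scaleR l a"
          using m by (simp add: a_def scaleR_add_right)
        have "1 + scaleR l a = scaleR (1 - l) 1 + scaleR (l/m) (\<Sum>k\<in>R. (1 - t k))"
          unfolding eqs la by (simp add: scaleR_diff_left)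
        also have "norm \<dots> \<le> (1 - l) * 1 + (l/m) * m"
        proof -
          have "norm (\<Sum>k\<in>R. (1 - t k)) \<le> (\<Sum>k\<in>R. 1)"
            by (rule order_trans[OF norm_sum sum_mono]) (use nb in \<open>auto simp: R_def\<close>)
          then have "norm (\<Sum>k\<in>R. (1 - t k)) \<le> m" by (simp add: m_def)
          then have "(l/m) * norm (\<Sum>k\<in>R. (1 - t k)) \<le> (l/m) * m"
            using False m by (intro mult_left_mono) auto
          moreover have "norm (scaleR (l/m) (\<Sum>k\<in>R. (1 - t k))) = (l/m) * norm (\<Sum>k\<in>R. (1 - t k))"
            using False m by simp
          moreover have "norm (scaleR (1 - l) (1::'a)) = (1 - l) * 1" using l by simp
          ultimately show ?thesis using norm_triangle_ineq[of "scaleR (1 - l) (1::'a)" "scaleR (l/m) (\<Sum>k\<in>R. (1 - t k))"]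
            by linarith
        qed
        finally show ?thesis using m by simp
      qed
    qed
    have "a = 0" by (rule K[OF saa H])
    then show ?thesis using m by (simp add: a_def)
  qed
qed

lemma proj_norm:
  assumes "adj P = P" "P * P = (P::'a::cstar_algebra)"
  shows "norm P \<le> 1"
proof -
  have "(norm P)^2 = norm P" using cstar_identity[of P] assms by simp
  then show ?thesis by (cases "norm P = 0") (auto simp: power2_eq_square)
qed

lemma iso_norm: "adj s * s = 1 \<Longrightarrow> norm (s::'a::cstar_algebra) \<le> 1"
  by (rule norm_le_one_of_adj) simp

lemma cuntz_orth:
  fixes s :: "nat \<Rightarrow> 'a::cstar_algebra"
  assumes iso: "\<forall>e<N. adj (s e) * s e = 1" and sm: "(\<Sum>e<N. s e * adj (s e)) = 1"
    and e: "e < N" and k: "k < N" and ke: "k \<noteq> e"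
  shows "adj (s k) * s e = 0"
proof -
  define t where "t j = adj (s e) * (s j * adj (s j)) * s e" for j
  have t_eq: "t j = adj (adj (s k') * s e) * (adj (s k') * s e)" if "k' = j" for j k'
    using that by (simp add: t_def adj_mult adj_adj mult.assoc)
  have tsum: "sum t {..<N} = 1"
    unfolding t_def by (simp add: sum_distrib_left[symmetric] sum_distrib_right[symmetric] sm iso e)
  have te: "t e = 1" using iso e by (simp add: t_def mult.assoc)
  define S where "S = {..<N} - {e}"
  have s0: "sum t S = 0" using sum.remove[of "{..<N}" e t] e tsum te by (simp add: S_def)
  have sa: "\<forall>j\<in>S. adj (t j) = t j" by (simp add: t_def adj_mult adj_adj mult.assoc)
  have nb: "\<forall>j\<in>S. norm (1 - t j) \<le> 1"
  proof
    fix j assume "j \<in> S"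
    then have j: "j < N" by (simp add: S_def)
    define P where "P = s j * adj (s j)"
    have PP: "P * P = P" using iso j by (simp add: P_def mult.assoc[symmetric]) (simp add: mult.assoc)
    have Q1: "adj (1 - P) = 1 - P" by (simp add: P_def adj_diff adj_mult adj_adj)
    have Q2: "(1 - P) * (1 - P) = 1 - P" using PP by (simp add: left_diff_distrib right_diff_distrib)
    have "1 - t j = adj (s e) * (1 - P) * s e"
      using iso e by (simp add: t_def P_def left_diff_distrib right_diff_distrib)
    also have "norm \<dots> \<le> norm (adj (s e)) * norm (1 - P) * norm (s e)"
    proof -
      have "norm (adj (s e) * (1 - P) * s e) \<le> norm (adj (s e) * (1 - P)) * norm (s e)" by (rule norm_mult_ineq)
      also have "\<dots> \<le> norm (adj (s e)) * norm (1 - P) * norm (s e)"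
        by (rule mult_right_mono[OF norm_mult_ineq norm_ge_zero])
      finally show ?thesis .
    qed
    also have "\<dots> \<le> 1 * 1 * 1"
      using proj_norm[OF Q1 Q2] iso_norm[of "s e"] iso e norm_adj[of "s e"]
      by (intro mult_mono) auto
    finally show "norm (1 - t j) \<le> 1" by simp
  qed
  have "t k = 0" using G_lemma[OF _ sa nb s0] k ke by (simp add: S_def)
  moreover have "norm (t k) = norm (adj (s k) * s e)^2" unfolding t_eq[OF refl] by (rule cstar_identity)
  ultimately show ?thesis by simp
qed



definition W :: "nat \<Rightarrow> nat \<Rightarrow> nat list set" where
  "W N k = {xs. set xs \<subseteq> {..<N} \<and> length xs = k}"

definition pw :: "(nat \<Rightarrow> 'a::cstar_algebra) \<Rightarrow> nat list \<Rightarrow> 'a" where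
  "pw s w = prod_list (map s w)"

definition conjm :: "(nat \<Rightarrow> 'a::cstar_algebra) \<Rightarrow> nat \<Rightarrow> 'a \<Rightarrow> 'a" where
  "conjm s N a = (\<Sum>e<N. adj (s e) * a * s e)"

lemma finite_W[simp]: "finite (W N k)"
  unfolding W_def by (rule finite_lists_length_eq) simp

lemma pw_Cons[simp]: "pw s (x # xs) = s x * pw s xs" and pw_Nil[simp]: "pw s [] = 1"
  by (simp_all add: pw_def)

lemma word_orth:
  fixes s :: "nat \<Rightarrow> 'a::cstar_algebra"
  assumes orth: "\<forall>e<N. \<forall>e'<N. adj (s e') * s e = (if e = e' then 1 else 0)"
    and "length w = length w'" "set w \<subseteq> {..<N}" "set w' \<subseteq> {..<N}"
  shows "adj (pw s w') * pw s w = (if w = w' then 1 else 0)"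
  using assms(2-4)
proof (induction w w' rule: list_induct2)
  case Nil then show ?case by simp
next
  case (Cons x xs y ys)
  have "adj (pw s (y # ys)) * pw s (x # xs) = adj (pw s ys) * (adj (s y) * s x) * pw s xs"
    by (simp add: adj_mult mult.assoc)
  also have "\<dots> = (if x # xs = y # ys then 1 else 0)"
    using orth Cons by auto
  finally show ?case .
qed

lemma conj_add: "conjm s N (x + y) = conjm s N x + conjm s N y"
  by (simp add: conjm_def distrib_left distrib_right sum.distrib)

lemma conj_scaleR: "conjm s N (scaleR r x) = scaleR r (conjm s N x)"
  by (simp add: conjm_def scaleR_sum_right)

lemma conjpow_scaleR: "(conjm s N ^^ k) (scaleR r x) = scaleR r ((conjm s N ^^ k) x)"
  by (induction k) (simp_all add: conj_scaleR)

lemma Wsum: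
  fixes s :: "nat \<Rightarrow> 'a::cstar_algebra"
  shows "(\<Sum>w\<in>W N k. adj (pw s w) * a * pw s w) = (conjm s N ^^ k) a"
proof (induction k arbitrary: a)
  case 0
  have "W N 0 = {[]}" by (auto simp: W_def)
  then show ?case by simp
next
  case (Suc k)
  have WS: "W N (Suc k) = (\<lambda>(xs, n). n # xs) ` (W N k \<times> {..<N})"
    unfolding W_def by (rule lists_length_Suc_eq)
  have inj: "inj_on (\<lambda>(xs, n). n # xs) (W N k \<times> {..<N})" by (auto simp: inj_on_def)
  have "(\<Sum>w\<in>W N (Suc k). adj (pw s w) * a * pw s w)
      = (\<Sum>(xs, n)\<in>W N k \<times> {..<N}. adj (pw s xs) * (adj (s n) * a * s n) * pw s xs)"
    unfolding WS by (subst sum.reindex[OF inj]) (simp add: case_prod_beta adj_mult mult.assoc)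
  also have "\<dots> = (\<Sum>xs\<in>W N k. \<Sum>n<N. adj (pw s xs) * (adj (s n) * a * s n) * pw s xs)"
    by (simp add: sum.cartesian_product)
  also have "\<dots> = (\<Sum>xs\<in>W N k. adj (pw s xs) * conjm s N a * pw s xs)"
    by (simp add: conjm_def sum_distrib_left sum_distrib_right)
  also have "\<dots> = (conjm s N ^^ Suc k) a" by (simp add: Suc funpow_swap1)
  finally show ?case .
qed

lemma paths_eq: "paths N1 N2 n = W N1 (fst n) \<times> W N2 (snd n)"
  by (auto simp: paths_def W_def)

lemma spath_eq: "spath sB sR p = pw sB (fst p) * pw sR (snd p)"
  by (simp add: spath_def pw_def)

lemma L_conj:
  fixes sB sR :: "nat \<Rightarrow> 'a::cstar_algebra"
  shows "L_n N1 N2 sB sR n a = scaleR (1 / real (N1 ^ fst n * N2 ^ snd n))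
     ((conjm sR N2 ^^ snd n) ((conjm sB N1 ^^ fst n) a))"
proof -
  have "(\<Sum>p\<in>paths N1 N2 n. adj (spath sB sR p) * a * spath sB sR p)
      = (\<Sum>(w,v)\<in>W N1 (fst n) \<times> W N2 (snd n). adj (pw sR v) * (adj (pw sB w) * a * pw sB w) * pw sR v)"
    by (simp add: paths_eq spath_eq adj_mult mult.assoc case_prod_beta)
  also have "\<dots> = (\<Sum>w\<in>W N1 (fst n). \<Sum>v\<in>W N2 (snd n). adj (pw sR v) * (adj (pw sB w) * a * pw sB w) * pw sR v)"
    by (simp add: sum.cartesian_product)
  also have "\<dots> = (\<Sum>v\<in>W N2 (snd n). adj (pw sR v) * (\<Sum>w\<in>W N1 (fst n). adj (pw sB w) * a * pw sB w) * pw sR v)"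
    by (subst sum.swap) (simp add: sum_distrib_left sum_distrib_right)
  also have "\<dots> = (conjm sR N2 ^^ snd n) ((conjm sB N1 ^^ fst n) a)"
    by (simp add: Wsum)
  finally show ?thesis by (simp add: L_n_def)
qed

lemma conj_commute:
  fixes sB sR :: "nat \<Rightarrow> 'a::cstar_algebra"
  assumes theta_bij: "bij_betw theta ({..<N1} \<times> {..<N2}) ({..<N2} \<times> {..<N1})"
    and rel: "\<forall>e<N1. \<forall>f<N2. sB e * sR f = sR (fst (theta (e, f))) * sB (snd (theta (e, f)))"
  shows "conjm sR N2 (conjm sB N1 a) = conjm sB N1 (conjm sR N2 a)"
proof -
  define g where "g = (\<lambda>(f, e). adj (sR f * sB e) * a * (sR f * sB e))"
  have "conjm sR N2 (conjm sB N1 a) = (\<Sum>f<N2. \<Sum>e<N1. adj (sB e * sR f) * a * (sB e * sR f))"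
    by (simp add: conjm_def sum_distrib_left sum_distrib_right adj_mult mult.assoc)
  also have "\<dots> = (\<Sum>(e, f)\<in>{..<N1} \<times> {..<N2}. adj (sB e * sR f) * a * (sB e * sR f))"
    by (subst sum.swap) (simp add: conjm_def sum_distrib_left sum_distrib_right sum.cartesian_product[symmetric] adj_mult mult.assoc)
  also have "\<dots> = (\<Sum>x\<in>{..<N1} \<times> {..<N2}. g (theta x))"
    by (rule sum.cong[OF refl]) (use rel in \<open>auto simp: g_def case_prod_beta\<close>)
  also have "\<dots> = (\<Sum>y\<in>{..<N2} \<times> {..<N1}. g y)"
    by (rule sum.reindex_bij_betw[OF theta_bij])
  also have "\<dots> = (\<Sum>f<N2. \<Sum>e<N1. adj (sR f * sB e) * a * (sR f * sB e))"
    unfolding g_def by (simp add: sum.cartesian_product)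
  also have "\<dots> = conjm sB N1 (conjm sR N2 a)"
    by (subst sum.swap) (simp add: conjm_def sum_distrib_left sum_distrib_right adj_mult mult.assoc)
  finally show ?thesis .
qed

lemma funpow_commute2:
  assumes "\<And>x. f (g x) = g (f x)"
  shows "(f ^^ m) ((g ^^ n) x) = (g ^^ n) ((f ^^ m) x)"
proof -
  have h: "f ((g ^^ n) x) = (g ^^ n) (f x)" for x
    by (induction n) (simp_all add: assms)
  show ?thesis by (induction m) (simp_all add: h)
qed



theorem proposition5p1:
  fixes N1 N2 :: nat
    and theta :: "nat \<times> nat \<Rightarrow> nat \<times> nat"
    and sB sR :: "nat \<Rightarrow> 'a::cstar_algebra"
  assumes theta_bij: "bij_betw theta ({..<N1} \<times> {..<N2}) ({..<N2} \<times> {..<N1})"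
    and fam: "theta_family N1 N2 theta sB sR"
  shows "(\<forall>n. transfer_operator (alpha_n N1 N2 sB sR n) (L_n N1 N2 sB sR n) \<and>
              L_n N1 N2 sB sR n 1 = 1) \<and>
         (\<forall>m n. L_n N1 N2 sB sR m \<circ> L_n N1 N2 sB sR n = L_n N1 N2 sB sR (m + n))"
proof -
  have isoB: "\<forall>e<N1. adj (sB e) * sB e = 1" and sumB: "(\<Sum>e<N1. sB e * adj (sB e)) = 1"
    and isoR: "\<forall>f<N2. adj (sR f) * sR f = 1" and sumR: "(\<Sum>f<N2. sR f * adj (sR f)) = 1"
    and rel: "\<forall>e<N1. \<forall>f<N2. sB e * sR f = sR (fst (theta (e, f))) * sB (snd (theta (e, f)))"
    using fam by (auto simp: theta_family_def)
  have N1: "N1 > 0" using sumB by (cases N1) auto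
  have N2: "N2 > 0" using sumR by (cases N2) auto
  have orthB: "\<forall>e<N1. \<forall>e'<N1. adj (sB e') * sB e = (if e = e' then 1 else 0)"
    using cuntz_orth[OF isoB sumB] isoB by auto
  have orthR: "\<forall>e<N2. \<forall>e'<N2. adj (sR e') * sR e = (if e = e' then 1 else 0)"
    using cuntz_orth[OF isoR sumR] isoR by auto
  define s where "s = spath sB sR"
  define P where "P n = paths N1 N2 n" for n
  define c where "c n = 1 / real (N1 ^ fst n * N2 ^ snd n)" for n :: "nat \<times> nat"
  have finP: "finite (P n)" for n by (simp add: P_def paths_eq)
  have Ldef: "L_n N1 N2 sB sR n a = scaleR (c n) (\<Sum>p\<in>P n. adj (s p) * a * s p)" for n a
    by (simp add: L_n_def c_def P_def s_def)
  have Adef: "alpha_n N1 N2 sB sR n a = (\<Sum>p\<in>P n. s p * a * adj (s p))" for n a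
    by (simp add: alpha_n_def P_def s_def)
  have orth: "adj (s q) * s p = (if p = q then 1 else 0)" if "p \<in> P n" "q \<in> P n" for p q n
  proof -
    have "adj (s q) * s p = adj (pw sR (snd q)) * (adj (pw sB (fst q)) * pw sB (fst p)) * pw sR (snd p)"
      by (simp add: s_def spath_eq adj_mult mult.assoc)
    also have "\<dots> = (if p = q then 1 else 0)"
      using that word_orth[OF orthB, of "fst p" "fst q"] word_orth[OF orthR, of "snd p" "snd q"]
      by (auto simp: P_def paths_def prod_eq_iff)
    finally show ?thesis .
  qed
  have cpos: "c n \<ge> 0" for n by (simp add: c_def)
  have main: "transfer_operator (alpha_n N1 N2 sB sR n) (L_n N1 N2 sB sR n) \<and> L_n N1 N2 sB sR n 1 = 1" for n
  proof -
    have lin: "clinear_map (L_n N1 N2 sB sR n)"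
      unfolding clinear_map_def Ldef
      by (simp add: distrib_left distrib_right sum.distrib scaleR_add_right mult_scaleC_left mult_scaleC_right
          scaleC_sum[symmetric] scaleC_scaleR_comm)
    have tr: "L_n N1 N2 sB sR n (alpha_n N1 N2 sB sR n a * b) = a * L_n N1 N2 sB sR n b" for a b
    proof -
      have "adj (s q) * (alpha_n N1 N2 sB sR n a * b) * s q = a * (adj (s q) * b * s q)" if q: "q \<in> P n" for q
      proof -
        have "adj (s q) * (alpha_n N1 N2 sB sR n a * b) * s q = (\<Sum>p\<in>P n. (adj (s q) * s p) * (a * (adj (s p) * b * s q)))"
          by (simp add: Adef sum_distrib_left sum_distrib_right mult.assoc)
        also have "\<dots> = (\<Sum>p\<in>P n. if p = q then a * (adj (s p) * b * s q) else 0)"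
          by (rule sum.cong[OF refl]) (simp add: orth q)
        also have "\<dots> = a * (adj (s q) * b * s q)" using finP q by simp
        finally show ?thesis .
      qed
      then show ?thesis unfolding Ldef
        by (simp add: sum_distrib_left mult_scaleR_right)
    qed
    have pos: "positive_map (L_n N1 N2 sB sR n)"
      unfolding positive_map_def positive_def
    proof (intro allI impI)
      fix x :: 'a assume "\<exists>y. x = adj y * y"
      then obtain y where x: "x = adj y * y" by blast
      define z where "z = scaleR (sqrt (c n)) (\<Sum>q\<in>P n. s q * y * s q)"
      have adjz: "adj z = scaleR (sqrt (c n)) (\<Sum>q\<in>P n. adj (s q) * adj y * adj (s q))"
        by (simp add: z_def adj_scaleR adj_sum adj_mult mult.assoc)
      have inner: "(\<Sum>p\<in>P n. adj (s q) * adj y * adj (s q) * (s p * y * s p)) = adj (s q) * (adj y * y) * s q"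
        if q: "q \<in> P n" for q
      proof -
        have "(\<Sum>p\<in>P n. adj (s q) * adj y * adj (s q) * (s p * y * s p))
            = (\<Sum>p\<in>P n. adj (s q) * adj y * (adj (s q) * s p) * (y * s p))"
          by (simp add: mult.assoc)
        also have "\<dots> = (\<Sum>p\<in>P n. if p = q then adj (s q) * adj y * (y * s p) else 0)"
          by (rule sum.cong[OF refl]) (simp add: orth q)
        also have "\<dots> = adj (s q) * (adj y * y) * s q" using finP q by (simp add: mult.assoc)
        finally show ?thesis .
      qed
      have "adj z * z = scaleR (sqrt (c n) * sqrt (c n))
          (\<Sum>q\<in>P n. \<Sum>p\<in>P n. adj (s q) * adj y * adj (s q) * (s p * y * s p))"
        unfolding adjz unfolding z_def by (simp add: sum_product)
      also have "\<dots> = L_n N1 N2 sB sR n x"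
        unfolding Ldef x using cpos[of n] by (simp add: inner)
      finally show "\<exists>y. L_n N1 N2 sB sR n x = adj y * y" by metis
    qed
    have one: "L_n N1 N2 sB sR n 1 = 1"
    proof -
      have "(\<Sum>p\<in>P n. adj (s p) * 1 * s p) = (\<Sum>p\<in>P n. (1::'a))"
        by (rule sum.cong[OF refl]) (simp add: orth)
      also have "\<dots> = scaleR (real (N1 ^ fst n * N2 ^ snd n)) 1"
        by (simp only: sum_one_alg) (simp add: P_def paths_eq card_cartesian_product W_def card_lists_length_eq)
      finally show ?thesis unfolding Ldef using N1 N2 by (simp add: c_def)
    qed
    show ?thesis using lin tr pos one by (simp add: transfer_operator_def)
  qed
  have comp: "L_n N1 N2 sB sR m (L_n N1 N2 sB sR n a) = L_n N1 N2 sB sR (m + n) a" for m n a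
  proof -
    have cm: "c m * c n = c (m + n)" by (simp add: c_def power_add)
    have sw: "(conjm sB N1 ^^ k) ((conjm sR N2 ^^ l) x) = (conjm sR N2 ^^ l) ((conjm sB N1 ^^ k) x)" for k l x
      by (rule funpow_commute2) (rule conj_commute[OF theta_bij rel, symmetric])
    show ?thesis
      unfolding L_conj c_def[symmetric] conjpow_scaleR
      by (simp add: cm sw funpow_add)
  qed
  show ?thesis using main comp by auto
qed


end
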